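(* Let $D=\mathrm{diag}(d_1,\dots,d_n)\in\mathbb{D}^n_+$, $W\in\mathbb{R}^{n\times n}$, $u\in\mathbb{R}^n$, $A:=W-D$ with rows $A_i^\top$, $\mathcal X=\{x\in\mathbb{R}^n: Dx\in[0,1]^n\}$, $\Lambda=\mathrm{diag}(\lambda_1,\dots,\lambda_n)\in\mathbb{D}^n_+$, and $$V_\infty(x)=\max_{\zeta\in\{0,1\}^n}(Ax+u)^\top\Lambda(\zeta-Dx).$$ Then: (i) for every $x\in\mathcal X$, $V_\infty(x)=\sum_{i=1}^n\lambda_i\big((A_i^\top x+u_i)_+(1-d_ix_i)+(A_i^\top x+u_i)_-d_ix_i\big)=\sum_{i=1}^n\lambda_i\big((A_i^\top x+u_i)_+-d_i(A_i^\top x+u_i)x_i\big)$; (ii) $V_\infty$ is globally Lipschitz on $\mathcal X$ and $V_\infty(x)\ge0$ for all $x\in\mathcal X$; (iii) for $x\in\mathcal X$, $V_\infty(x)=0$ if and only if $x$ is an equilibrium of the hard-selector inclusion $x'\in-Dx+\mathcal H(Ax+u)$; in particular, if $A$ is Lyapunov diagonally stable (with $\Lambda$ a diagonal certificate), then $V_\infty$ is positive definite on $\mathcal X$ with respect to the unique equilibrium $x^\star$.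
   Context: $\mathbb{D}^n_+$ is the set of positive diagonal matrices. $(z)_+=\max(0,z)$, $(z)_-=-\min(0,z)$. $h(z)=\{0\}$ if $z<0$, $[0,1]$ if $z=0$, $\{1\}$ if $z>0$, and $\mathcal H(x)=h(x_1)\times\cdots\times h(x_n)$; an equilibrium of the inclusion is $x$ with $0\in-Dx+\mathcal H(Ax+u)$. A matrix $A$ is Lyapunov diagonally stable with diagonal certificate $\Lambda\in\mathbb{D}^n_+$ if $A^\top\Lambda+\Lambda A\prec0$; in the paper $\Lambda$ in $V_\infty$ is taken to be this certificate. *)

theory Defs
  imports "HOL-Analysis.Analysis"
begin

definition diagm :: "real^'n \<Rightarrow> real^'n^'n" where
  "diagm d = (\<chi> i j. if i = j then d $ i else 0)"

definition pospart :: "real \<Rightarrow> real" where "pospart z = max 0 z"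
definition negpart :: "real \<Rightarrow> real" where "negpart z = - min 0 z"

definition hsel :: "real \<Rightarrow> real set" where
  "hsel z = (if z < 0 then {0} else if z = 0 then {0..1} else {1})"

definition Hsel :: "real^'n \<Rightarrow> (real^'n) set" where
  "Hsel y = {\<eta>. \<forall>i. \<eta> $ i \<in> hsel (y $ i)}"

definition is_equilibrium :: "real^'n \<Rightarrow> real^'n^'n \<Rightarrow> real^'n \<Rightarrow> real^'n \<Rightarrow> bool" where
  "is_equilibrium d A u x \<longleftrightarrow> (0::real^'n) \<in> {- (diagm d *v x) + \<eta> | \<eta>. \<eta> \<in> Hsel (A *v x + u)}"

definition Xset :: "real^'n \<Rightarrow> (real^'n) set" where
  "Xset d = {x. \<forall>i. (diagm d *v x) $ i \<in> {0..1}}"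

definition Vinf :: "real^'n \<Rightarrow> real^'n^'n \<Rightarrow> real^'n \<Rightarrow> real^'n \<Rightarrow> real^'n \<Rightarrow> real" where
  "Vinf d A u lam x = Max {(A *v x + u) \<bullet> (diagm lam *v (\<zeta> - diagm d *v x)) | \<zeta>. \<forall>i. \<zeta> $ i \<in> {0, 1}}"

definition neg_definite :: "real^'n^'n \<Rightarrow> bool" where
  "neg_definite M \<longleftrightarrow> (\<forall>x. x \<noteq> 0 \<longrightarrow> x \<bullet> (M *v x) < 0)"

definition lds_certificate :: "real^'n^'n \<Rightarrow> real^'n \<Rightarrow> bool" where
  "lds_certificate A lam \<longleftrightarrow> (\<forall>i. lam $ i > 0) \<and>
     neg_definite (transpose A ** diagm lam + diagm lam ** A)"

end

theory Submission
  imports Defs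
begin

lemma diagm_mult: "diagm d *v v = (\<chi> i. d $ i * v $ i)"
proof -
  have "(\<Sum>j\<in>UNIV. (if i = j then d $ i else 0) * v $ j) = d $ i * v $ i" for i
  proof -
    have "(\<Sum>j\<in>UNIV. (if i = j then d $ i else 0) * v $ j) = (\<Sum>j\<in>UNIV. if i = j then d $ j * v $ j else 0)"
      by (rule sum.cong) auto
    then show ?thesis by simp
  qed
  then show ?thesis unfolding diagm_def matrix_vector_mult_def vec_eq_iff by simp
qed

lemma Xset_cbox:
  assumes "\<forall>i. d $ i > (0::real)"
  shows "Xset d = cbox 0 (\<chi> i. 1 / d $ i)"
proof -
  have "(0 \<le> d$i * x$i \<and> d$i * x$i \<le> 1) \<longleftrightarrow> (0 \<le> x$i \<and> x$i \<le> 1 / d$i)" for x :: "real^'a" and i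
  proof -
    have p: "d$i > 0" using assms by auto
    have "0 \<le> d$i * x$i \<longleftrightarrow> 0 \<le> x$i" using p by (simp add: zero_le_mult_iff)
    moreover have "d$i * x$i \<le> 1 \<longleftrightarrow> x$i \<le> 1 / d$i" using p by (simp add: field_simps)
    ultimately show ?thesis by blast
  qed
  then show ?thesis by (auto simp: Xset_def diagm_mult mem_box_cart)
qed

lemma finite_01: "finite {\<zeta>::real^'n. \<forall>i. \<zeta> $ i \<in> {0,1}}"
proof -
  have "{\<zeta>::real^'n. \<forall>i. \<zeta> $ i \<in> {0,1}} \<subseteq> (\<lambda>S. \<chi> i. if i \<in> S then 1 else 0) ` (UNIV :: 'n set set)"
  proof
    fix \<zeta> :: "real^'n" assume "\<zeta> \<in> {\<zeta>. \<forall>i. \<zeta> $ i \<in> {0,1}}"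
    then have "\<zeta> = (\<chi> i. if i \<in> {i. \<zeta> $ i = 1} then 1 else 0)" by (auto simp: vec_eq_iff)
    then show "\<zeta> \<in> (\<lambda>S. \<chi> i. if i \<in> S then 1 else 0) ` (UNIV :: 'n set set)" by blast
  qed
  then show ?thesis by (rule finite_subset) simp
qed

lemma term_bound:
  fixes y l z t :: real
  assumes "l > 0" "z \<in> {0,1}"
  shows "y * (l * (z - t)) \<le> l * (pospart y * (1 - t) + negpart y * t)"
proof (cases "y \<ge> 0")
  case True
  have "l * y * z \<le> l * y" using assms True by auto
  then show ?thesis using True by (simp add: pospart_def negpart_def algebra_simps)
next
  case False
  have "l * y * z \<le> 0" using assms False mult_pos_neg[of l y] by auto
  then show ?thesis using False by (simp add: pospart_def negpart_def algebra_simps)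
qed

lemma term_opt:
  fixes y l t :: real
  shows "y * (l * ((if y > 0 then 1 else 0) - t)) = l * (pospart y * (1 - t) + negpart y * t)"
proof (cases "y > 0")
  case True
  then have "pospart y = y" "negpart y = 0" by (auto simp: pospart_def negpart_def)
  then show ?thesis using True by (simp add: algebra_simps)
next
  case False
  then have "pospart y = 0" "negpart y = - y" by (auto simp: pospart_def negpart_def)
  then show ?thesis using False by (simp add: algebra_simps)
qed

lemma Vinf_formula:
  fixes d lam u x :: "real^'n" and A :: "real^'n^'n"
  assumes "\<forall>i. lam $ i > 0"
  shows "Vinf d A u lam x = (\<Sum>i\<in>UNIV. lam $ i * (pospart ((A *v x) $ i + u $ i) * (1 - d $ i * x $ i)
                                 + negpart ((A *v x) $ i + u $ i) * (d $ i * x $ i)))"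
proof -
  define y where "y = A *v x + u"
  let ?f = "\<lambda>\<zeta>::real^'n. (A *v x + u) \<bullet> (diagm lam *v (\<zeta> - diagm d *v x))"
  have fe: "?f \<zeta> = (\<Sum>i\<in>UNIV. y $ i * (lam $ i * (\<zeta> $ i - d $ i * x $ i)))" for \<zeta>
    by (simp add: y_def inner_vec_def diagm_mult)
  have S: "{?f \<zeta> | \<zeta>. \<forall>i. \<zeta> $ i \<in> {0, 1}} = ?f ` {\<zeta>. \<forall>i. \<zeta> $ i \<in> {0,1}}" by auto
  define z where "z = (\<chi> i. if y $ i > 0 then 1 else (0::real))"
  show ?thesis
    unfolding Vinf_def S
  proof (rule Max_eqI)
    show "finite (?f ` {\<zeta>. \<forall>i. \<zeta> $ i \<in> {0,1}})" by (rule finite_imageI[OF finite_01])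
    show "b \<le> (\<Sum>i\<in>UNIV. lam $ i * (pospart ((A *v x) $ i + u $ i) * (1 - d $ i * x $ i)
                                 + negpart ((A *v x) $ i + u $ i) * (d $ i * x $ i)))"
      if "b \<in> ?f ` {\<zeta>. \<forall>i. \<zeta> $ i \<in> {0,1}}" for b
    proof -
      from that obtain \<zeta> where z: "\<forall>i. \<zeta> $ i \<in> {0,1}" "b = ?f \<zeta>" by blast
      show ?thesis unfolding z(2) fe
      proof (rule sum_mono)
        fix i
        show "y $ i * (lam $ i * (\<zeta> $ i - d $ i * x $ i)) \<le> lam $ i * (pospart ((A *v x) $ i + u $ i) * (1 - d $ i * x $ i)
                                 + negpart ((A *v x) $ i + u $ i) * (d $ i * x $ i))"
          using term_bound[of "lam$i" "\<zeta>$i" "y$i" "d$i*x$i"] z(1) assms by (simp add: y_def)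
      qed
    qed
    have fz: "?f z = (\<Sum>i\<in>UNIV. lam $ i * (pospart ((A *v x) $ i + u $ i) * (1 - d $ i * x $ i)
                                 + negpart ((A *v x) $ i + u $ i) * (d $ i * x $ i)))"
      unfolding fe
    proof (rule sum.cong)
      fix i
      have yi: "y $ i = (A *v x) $ i + u $ i" by (simp add: y_def)
      have zi: "z $ i = (if y $ i > 0 then 1 else 0)" by (simp add: z_def)
      have "y $ i * (lam $ i * (z $ i - d $ i * x $ i)) = lam $ i * (pospart (y $ i) * (1 - d $ i * x $ i)
                                 + negpart (y $ i) * (d $ i * x $ i))"
        unfolding zi by (rule term_opt)
      then show "y $ i * (lam $ i * (z $ i - d $ i * x $ i)) = lam $ i * (pospart ((A *v x) $ i + u $ i) * (1 - d $ i * x $ i)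
                                 + negpart ((A *v x) $ i + u $ i) * (d $ i * x $ i))"
        by (simp only: yi)
    qed simp
    have zin: "z \<in> {\<zeta>. \<forall>i. \<zeta> $ i \<in> {0,1}}" by (auto simp: z_def)
    show "(\<Sum>i\<in>UNIV. lam $ i * (pospart ((A *v x) $ i + u $ i) * (1 - d $ i * x $ i)
                                 + negpart ((A *v x) $ i + u $ i) * (d $ i * x $ i)))
       \<in> ?f ` {\<zeta>. \<forall>i. \<zeta> $ i \<in> {0,1}}" by (rule rev_image_eqI[where f = ?f, OF zin fz[symmetric]])
  qed
qed


lemma eq_iff:
  fixes d u x :: "real^'n" and A :: "real^'n^'n"
  shows "is_equilibrium d A u x \<longleftrightarrow> (\<forall>i. d$i * x$i \<in> hsel ((A *v x)$i + u$i))"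
proof
  assume "is_equilibrium d A u x"
  then obtain \<eta> where e: "0 = - (diagm d *v x) + \<eta>" "\<eta> \<in> Hsel (A *v x + u)"
    unfolding is_equilibrium_def by blast
  have "\<eta> = diagm d *v x" using e(1) by (simp add: algebra_simps eq_neg_iff_add_eq_0)
  then show "\<forall>i. d$i * x$i \<in> hsel ((A *v x)$i + u$i)" using e(2) by (simp add: Hsel_def diagm_mult)
next
  assume h: "\<forall>i. d$i * x$i \<in> hsel ((A *v x)$i + u$i)"
  have "diagm d *v x \<in> Hsel (A *v x + u)" using h by (simp add: Hsel_def diagm_mult)
  then show "is_equilibrium d A u x" unfolding is_equilibrium_def by force
qed

lemma term_nonneg:
  fixes y t :: real
  assumes "0 \<le> t" "t \<le> 1"
  shows "0 \<le> pospart y * (1 - t) + negpart y * t"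
proof -
  have "0 \<le> pospart y" "0 \<le> negpart y" by (auto simp: pospart_def negpart_def)
  then show ?thesis using assms by simp
qed

lemma term_zero:
  fixes y t :: real
  assumes "0 \<le> t" "t \<le> 1"
  shows "pospart y * (1 - t) + negpart y * t = 0 \<longleftrightarrow> t \<in> hsel y"
  using assms by (auto simp: pospart_def negpart_def hsel_def)

lemma hsel_01: "t \<in> hsel y \<Longrightarrow> 0 \<le> t \<and> t \<le> 1"
  by (auto simp: hsel_def split: if_splits)

lemma hsel_ineq:
  fixes y t s :: real
  assumes "t \<in> hsel y" "0 \<le> s" "s \<le> 1"
  shows "y * (s - t) \<le> 0"
proof -
  consider "y < 0" "t = 0" | "y = 0" | "y > 0" "t = 1" using assms(1) by (auto simp: hsel_def split: if_splits)
  then show ?thesis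
  proof cases
    case 1 then show ?thesis using assms mult_nonpos_nonneg[of y s] by simp
  next
    case 2 then show ?thesis by simp
  next
    case 3 then show ?thesis using assms mult_nonneg_nonpos[of y "s - 1"] by simp
  qed
qed

lemma clamp_hsel:
  fixes y t :: real
  assumes "t = min 1 (max 0 (t + y))"
  shows "t \<in> hsel y"
  using assms by (auto simp: hsel_def min_def max_def split: if_splits)

lemma lip_mult:
  fixes f g :: "'a::metric_space \<Rightarrow> real"
  assumes f: "Lf-lipschitz_on S f" and g: "Lg-lipschitz_on S g"
    and bf: "\<forall>x\<in>S. \<bar>f x\<bar> \<le> B" and bg: "\<forall>x\<in>S. \<bar>g x\<bar> \<le> B" and B: "B \<ge> 0"
  shows "(B*Lf + B*Lg)-lipschitz_on S (\<lambda>x. f x * g x)"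
proof (rule lipschitz_onI)
  show "0 \<le> B*Lf + B*Lg" using B lipschitz_on_nonneg[OF f] lipschitz_on_nonneg[OF g] by simp
  fix x y assume xy: "x \<in> S" "y \<in> S"
  have "f x * g x - f y * g y = f x * (g x - g y) + g y * (f x - f y)" by (simp add: algebra_simps)
  then have "\<bar>f x * g x - f y * g y\<bar> \<le> \<bar>f x\<bar> * \<bar>g x - g y\<bar> + \<bar>g y\<bar> * \<bar>f x - f y\<bar>"
    by (metis abs_mult abs_triangle_ineq)
  also have "\<dots> \<le> B * (Lg * dist x y) + B * (Lf * dist x y)"
  proof (rule add_mono)
    have "\<bar>g x - g y\<bar> \<le> Lg * dist x y" using lipschitz_onD[OF g xy] by (simp add: dist_real_def)
    then show "\<bar>f x\<bar> * \<bar>g x - g y\<bar> \<le> B * (Lg * dist x y)"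
      using bf xy by (intro mult_mono) auto
    have "\<bar>f x - f y\<bar> \<le> Lf * dist x y" using lipschitz_onD[OF f xy] by (simp add: dist_real_def)
    then show "\<bar>g y\<bar> * \<bar>f x - f y\<bar> \<le> B * (Lf * dist x y)"
      using bg xy by (intro mult_mono) auto
  qed
  finally show "dist (f x * g x) (f y * g y) \<le> (B*Lf + B*Lg) * dist x y"
    by (simp add: dist_real_def algebra_simps)
qed

lemma lip_bounded:
  fixes f :: "'a::metric_space \<Rightarrow> real"
  assumes "compact S" "C-lipschitz_on S f"
  shows "\<exists>B\<ge>0. \<forall>x\<in>S. \<bar>f x\<bar> \<le> B"
proof -
  have "compact (f ` S)"
    using assms by (intro compact_continuous_image lipschitz_on_continuous_on) auto
  then obtain a where "\<forall>y\<in>f ` S. \<bar>y\<bar> \<le> a" using compact_imp_bounded bounded_real by metis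
  then show ?thesis by (intro exI[of _ "max 0 a"]) auto
qed

lemma lip_sum:
  fixes f :: "'i \<Rightarrow> 'a::metric_space \<Rightarrow> real"
  assumes "finite I" "\<forall>i\<in>I. \<exists>C. C-lipschitz_on S (f i)"
  shows "\<exists>C. C-lipschitz_on S (\<lambda>x. \<Sum>i\<in>I. f i x)"
  using assms
proof (induction I rule: finite_induct)
  case empty
  then show ?case using lipschitz_on_constant[of S 0] by auto
next
  case (insert i I)
  then obtain C1 C2 where "C1-lipschitz_on S (f i)" "C2-lipschitz_on S (\<lambda>x. \<Sum>i\<in>I. f i x)" by auto
  then have "(C1 + C2)-lipschitz_on S (\<lambda>x. f i x + (\<Sum>i\<in>I. f i x))" by (rule lipschitz_on_add)
  then show ?case using insert by auto
qed

lemma lip_pospart: "1-lipschitz_on S pospart"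
  by (rule lipschitz_onI) (auto simp: dist_real_def pospart_def)

lemma lip_comp_nth: "1-lipschitz_on S (\<lambda>x::real^'n. x $ i + c)"
proof (rule lipschitz_onI)
  fix x y :: "real^'n"
  have "\<bar>(x - y) $ i\<bar> \<le> norm (x - y)" by (rule component_le_norm_cart)
  then show "dist (x $ i + c) (y $ i + c) \<le> 1 * dist x y" by (simp add: dist_real_def dist_norm)
qed simp

lemma lip_Y:
  fixes u :: "real^'n" and A :: "real^'n^'n"
  shows "\<exists>C. C-lipschitz_on S (\<lambda>x. (A *v x) $ i + u $ i)"
proof -
  have "bounded_linear (\<lambda>x::real^'n. A *v x)"
    by (simp add: linear_conv_bounded_linear)
  then obtain B where B: "B-lipschitz_on S (\<lambda>x::real^'n. A *v x)"
    by (rule bounded_linear.lipschitz_boundE)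
  have "(1 * B)-lipschitz_on S (\<lambda>x. (\<lambda>v. v $ i + u $ i) (A *v x))"
    by (rule lipschitz_on_compose2[OF B lip_comp_nth])
  then show ?thesis by auto
qed


lemma quad_form:
  fixes e lam :: "real^'n" and A :: "real^'n^'n"
  shows "e \<bullet> ((transpose A ** diagm lam + diagm lam ** A) *v e)
         = 2 * (\<Sum>i\<in>UNIV. lam $ i * (e $ i * (A *v e) $ i))"
proof -
  have "(transpose A ** diagm lam + diagm lam ** A) *v e
        = transpose A *v (diagm lam *v e) + diagm lam *v (A *v e)"
    by (simp add: matrix_vector_mult_add_rdistrib matrix_vector_mul_assoc)
  moreover have "e \<bullet> (transpose A *v w) = (A *v e) \<bullet> w" for w :: "real^'n"
  proof -
    have "transpose A *v w = w v* A" using vector_transpose_matrix[of w "transpose A"] by simp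
    then show ?thesis using dot_lmul_matrix[of w A e] by (simp add: inner_commute)
  qed
  ultimately have "e \<bullet> ((transpose A ** diagm lam + diagm lam ** A) *v e)
     = (A *v e) \<bullet> (diagm lam *v e) + e \<bullet> (diagm lam *v (A *v e))"
    by (simp add: inner_add_right)
  also have "\<dots> = 2 * (\<Sum>i\<in>UNIV. lam $ i * (e $ i * (A *v e) $ i))"
    by (simp add: inner_vec_def diagm_mult sum.distrib[symmetric] sum_distrib_left algebra_simps)
  finally show ?thesis .
qed

lemma unique_eq:
  fixes d lam u x1 x2 :: "real^'n" and A :: "real^'n^'n"
  assumes d: "\<forall>i. d $ i > 0" and cert: "lds_certificate A lam"
    and e1: "is_equilibrium d A u x1" and e2: "is_equilibrium d A u x2"
  shows "x1 = x2"
proof (rule ccontr)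
  assume ne: "x1 \<noteq> x2"
  define e where "e = x1 - x2"
  have "e \<noteq> 0" using ne by (simp add: e_def)
  have lam: "\<forall>i. lam $ i > 0" and nd: "neg_definite (transpose A ** diagm lam + diagm lam ** A)"
    using cert by (auto simp: lds_certificate_def)
  have h1: "\<forall>i. d$i * x1$i \<in> hsel ((A *v x1)$i + u$i)" using e1 eq_iff by blast
  have h2: "\<forall>i. d$i * x2$i \<in> hsel ((A *v x2)$i + u$i)" using e2 eq_iff by blast
  have comp: "0 \<le> lam $ i * (e $ i * (A *v e) $ i)" for i
  proof -
    let ?y1 = "(A *v x1)$i + u$i" and ?y2 = "(A *v x2)$i + u$i"
    let ?t1 = "d$i * x1$i" and ?t2 = "d$i * x2$i"
    have a: "?y1 * (?t2 - ?t1) \<le> 0" using hsel_ineq[of ?t1 ?y1 ?t2] h1 h2 hsel_01 by blast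
    have b: "?y2 * (?t1 - ?t2) \<le> 0" using hsel_ineq[of ?t2 ?y2 ?t1] h1 h2 hsel_01 by blast
    have "(A *v e) $ i = ?y1 - ?y2" by (simp add: e_def matrix_vector_mult_diff_distrib)
    then have "(A *v e) $ i * (d $ i * e $ i) = ?y1 * (?t1 - ?t2) - ?y2 * (?t1 - ?t2)"
      by (simp add: e_def algebra_simps)
    also have "\<dots> \<ge> 0" using a b by (simp add: algebra_simps)
    finally have "0 \<le> d $ i * (e $ i * (A *v e) $ i)" by (simp add: algebra_simps)
    moreover have "d $ i > 0" using d by simp
    ultimately have "0 \<le> e $ i * (A *v e) $ i" using mult_pos_neg[of "d$i" "e $ i * (A *v e) $ i"] by linarith
    then show ?thesis using lam by (simp add: less_imp_le)
  qed
  have "0 \<le> 2 * (\<Sum>i\<in>UNIV. lam $ i * (e $ i * (A *v e) $ i))"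
    using comp by (simp add: sum_nonneg)
  moreover have "e \<bullet> ((transpose A ** diagm lam + diagm lam ** A) *v e) < 0"
    using nd \<open>e \<noteq> 0\<close> by (simp add: neg_definite_def)
  ultimately show False using quad_form[of e A lam] by simp
qed

lemma exists_eq:
  fixes d u :: "real^'n" and A :: "real^'n^'n"
  assumes d: "\<forall>i. d $ i > 0"
  shows "\<exists>x. is_equilibrium d A u x"
proof -
  define g where "g = (\<lambda>x::real^'n. \<chi> i. min 1 (max 0 (d$i * x$i + ((A *v x)$i + u$i))) / d$i)"
  have cY: "continuous_on S (\<lambda>x. (A *v x) $ i + u $ i)" for S i
    using lip_Y[of S A i u] lipschitz_on_continuous_on by blast
  have cont: "continuous_on (Xset d) g"
  proof -
    have dn: "\<And>i. d$i \<noteq> 0" using d by (metis less_irrefl)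
    show ?thesis unfolding g_def by (intro continuous_on_vec_lambda continuous_intros cY) (simp add: dn)
  qed
  have dg: "d $ i * g x $ i = min 1 (max 0 (d$i * x$i + ((A *v x)$i + u$i)))" for x i
  proof -
    have "d$i \<noteq> 0" using d by (metis less_irrefl)
    then show ?thesis by (simp add: g_def)
  qed
  have into: "g \<in> Xset d \<rightarrow> Xset d"
    by (auto simp: Xset_def diagm_mult dg)
  have X: "Xset d = cbox 0 (\<chi> i. 1 / d $ i)" by (rule Xset_cbox[OF d])
  obtain x where "x \<in> Xset d" "g x = x"
  proof (rule brouwer[of "Xset d" g])
    show "compact (Xset d)" "convex (Xset d)" unfolding X by auto
    have "0 \<in> Xset d" by (simp add: Xset_def diagm_mult)
    then show "Xset d \<noteq> {}" by blast
  qed (use cont into in auto)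
  then have "d $ i * x $ i = min 1 (max 0 (d$i * x$i + ((A *v x)$i + u$i)))" for i
    using dg[of i x] by simp
  then have "\<forall>i. d$i * x$i \<in> hsel ((A *v x)$i + u$i)" using clamp_hsel by blast
  then show ?thesis using eq_iff by blast
qed


theorem proposition8:
  fixes d lam u :: "real^'n" and W :: "real^'n^'n"
  defines "A \<equiv> W - diagm d"
  assumes d_pos: "\<forall>i. d $ i > 0"
    and lam_pos: "\<forall>i. lam $ i > 0"
  shows
    "(\<forall>x \<in> Xset d.
        Vinf d A u lam x =
          (\<Sum>i\<in>UNIV. lam $ i * (pospart ((A *v x) $ i + u $ i) * (1 - d $ i * x $ i)
                                 + negpart ((A *v x) $ i + u $ i) * (d $ i * x $ i)))
      \<and> Vinf d A u lam x =
          (\<Sum>i\<in>UNIV. lam $ i * (pospart ((A *v x) $ i + u $ i)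
                                 - d $ i * ((A *v x) $ i + u $ i) * x $ i)))
     \<and> (\<exists>C. C-lipschitz_on (Xset d) (Vinf d A u lam))
     \<and> (\<forall>x \<in> Xset d. Vinf d A u lam x \<ge> 0)
     \<and> (\<forall>x \<in> Xset d. Vinf d A u lam x = 0 \<longleftrightarrow> is_equilibrium d A u x)
     \<and> (lds_certificate A lam \<longrightarrow>
          (\<exists>xs. (\<forall>x. is_equilibrium d A u x \<longleftrightarrow> x = xs) \<and> xs \<in> Xset d
                \<and> Vinf d A u lam xs = 0
                \<and> (\<forall>x \<in> Xset d. x \<noteq> xs \<longrightarrow> Vinf d A u lam x > 0)))"
proof -
  let ?Y = "\<lambda>x i. (A *v x) $ i + u $ i"
  let ?T = "\<lambda>x i. pospart (?Y x i) * (1 - d $ i * x $ i) + negpart (?Y x i) * (d $ i * x $ i)"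
  have F1: "Vinf d A u lam x = (\<Sum>i\<in>UNIV. lam $ i * ?T x i)" for x
    by (rule Vinf_formula[OF lam_pos])
  have pn: "pospart y - negpart y = y" for y by (auto simp: pospart_def negpart_def max_def min_def)
  have same: "?T x i = pospart (?Y x i) - d $ i * (?Y x i) * x $ i" for x i
  proof -
    have "?T x i = pospart (?Y x i) - d $ i * (pospart (?Y x i) - negpart (?Y x i)) * x $ i"
      by (simp add: algebra_simps)
    then show ?thesis by (simp only: pn)
  qed
  have F2: "Vinf d A u lam x = (\<Sum>i\<in>UNIV. lam $ i * (pospart (?Y x i) - d $ i * (?Y x i) * x $ i))" for x
    unfolding F1 same ..
  have inX: "x \<in> Xset d \<Longrightarrow> 0 \<le> d $ i * x $ i \<and> d $ i * x $ i \<le> 1" for x i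
    by (simp add: Xset_def diagm_mult)
  have Tnn: "x \<in> Xset d \<Longrightarrow> 0 \<le> lam $ i * ?T x i" for x i
    using term_nonneg inX lam_pos by (simp add: less_imp_le)
  have P1: "\<forall>x \<in> Xset d. Vinf d A u lam x = (\<Sum>i\<in>UNIV. lam $ i * ?T x i)
      \<and> Vinf d A u lam x = (\<Sum>i\<in>UNIV. lam $ i * (pospart (?Y x i) - d $ i * (?Y x i) * x $ i))"
    using F1 F2 by blast
  have P3: "\<forall>x \<in> Xset d. Vinf d A u lam x \<ge> 0"
    using F1 Tnn by (simp add: sum_nonneg)
  have P4: "\<forall>x \<in> Xset d. Vinf d A u lam x = 0 \<longleftrightarrow> is_equilibrium d A u x"
  proof
    fix x assume x: "x \<in> Xset d"
    have "Vinf d A u lam x = 0 \<longleftrightarrow> (\<forall>i\<in>UNIV. lam $ i * ?T x i = 0)"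
      unfolding F1 by (rule sum_nonneg_eq_0_iff) (use Tnn x in auto)
    also have "\<dots> \<longleftrightarrow> (\<forall>i. ?T x i = 0)" using lam_pos by (simp add: less_imp_neq[symmetric])
    also have "\<dots> \<longleftrightarrow> (\<forall>i. d$i * x$i \<in> hsel (?Y x i))" using term_zero inX[OF x] by blast
    also have "\<dots> \<longleftrightarrow> is_equilibrium d A u x" using eq_iff by blast
    finally show "Vinf d A u lam x = 0 \<longleftrightarrow> is_equilibrium d A u x" .
  qed
  have P2: "\<exists>C. C-lipschitz_on (Xset d) (Vinf d A u lam)"
  proof -
    have cX: "compact (Xset d)" using Xset_cbox[OF d_pos] by simp
    have "\<forall>i\<in>UNIV. \<exists>C. C-lipschitz_on (Xset d) (\<lambda>x. lam $ i * (pospart (?Y x i) - d $ i * (?Y x i) * x $ i))"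
    proof
      fix i
      obtain CY where CY: "CY-lipschitz_on (Xset d) (\<lambda>x. ?Y x i)" using lip_Y by blast
      have L1: "(1 * CY)-lipschitz_on (Xset d) (\<lambda>x. pospart (?Y x i))"
        by (rule lipschitz_on_compose2[OF CY lip_pospart])
      have L2: "(\<bar>d $ i\<bar> * CY)-lipschitz_on (Xset d) (\<lambda>x. d $ i * ?Y x i)"
        by (rule lipschitz_on_cmult_real[OF CY])
      have L3: "1-lipschitz_on (Xset d) (\<lambda>x. x $ i + 0)" by (rule lip_comp_nth)
      then have L3': "1-lipschitz_on (Xset d) (\<lambda>x. x $ i)" by simp
      obtain B1 where B1: "B1 \<ge> 0" "\<forall>x\<in>Xset d. \<bar>d $ i * ?Y x i\<bar> \<le> B1"
        using lip_bounded[OF cX L2] by blast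
      obtain B2 where B2: "B2 \<ge> 0" "\<forall>x\<in>Xset d. \<bar>x $ i\<bar> \<le> B2"
        using lip_bounded[OF cX L3'] by blast
      have L4: "(max B1 B2 * (\<bar>d $ i\<bar> * CY) + max B1 B2 * 1)-lipschitz_on (Xset d)
                   (\<lambda>x. d $ i * ?Y x i * x $ i)"
        by (rule lip_mult[OF L2 L3']) (use B1 B2 in auto)
      have "(1 * CY + (max B1 B2 * (\<bar>d $ i\<bar> * CY) + max B1 B2 * 1))-lipschitz_on (Xset d)
              (\<lambda>x. pospart (?Y x i) - d $ i * ?Y x i * x $ i)"
        by (rule lipschitz_on_diff[OF L1 L4])
      then show "\<exists>C. C-lipschitz_on (Xset d) (\<lambda>x. lam $ i * (pospart (?Y x i) - d $ i * (?Y x i) * x $ i))"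
        using lipschitz_on_cmult_real by blast
    qed
    note hl = this
    have fin: "finite (UNIV::'n set)" by simp
    have "\<exists>C. C-lipschitz_on (Xset d) (\<lambda>x. \<Sum>i\<in>UNIV. lam $ i * (pospart (?Y x i) - d $ i * (?Y x i) * x $ i))"
      by (rule lip_sum[OF fin hl])
    then
    obtain C where "C-lipschitz_on (Xset d) (\<lambda>x. \<Sum>i\<in>UNIV. lam $ i * (pospart (?Y x i) - d $ i * (?Y x i) * x $ i))"
      by blast
    then have "C-lipschitz_on (Xset d) (Vinf d A u lam)"
      by (rule lipschitz_on_transform) (rule F2)
    then show ?thesis by blast
  qed
  have P5: "lds_certificate A lam \<longrightarrow>
          (\<exists>xs. (\<forall>x. is_equilibrium d A u x \<longleftrightarrow> x = xs) \<and> xs \<in> Xset d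
                \<and> Vinf d A u lam xs = 0
                \<and> (\<forall>x \<in> Xset d. x \<noteq> xs \<longrightarrow> Vinf d A u lam x > 0))"
  proof
    assume cert: "lds_certificate A lam"
    obtain xs where xs: "is_equilibrium d A u xs" using exists_eq[OF d_pos] by blast
    have U: "\<forall>x. is_equilibrium d A u x \<longleftrightarrow> x = xs"
      using unique_eq[OF d_pos cert] xs by blast
    have xsX: "xs \<in> Xset d"
      using xs eq_iff hsel_01 by (simp add: Xset_def diagm_mult) blast
    have V0: "Vinf d A u lam xs = 0" using P4 xsX xs by blast
    have "\<forall>x \<in> Xset d. x \<noteq> xs \<longrightarrow> Vinf d A u lam x > 0"
      using P3 P4 U by (metis order_neq_le_trans)
    then show "\<exists>xs. (\<forall>x. is_equilibrium d A u x \<longleftrightarrow> x = xs) \<and> xs \<in> Xset d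
                \<and> Vinf d A u lam xs = 0
                \<and> (\<forall>x \<in> Xset d. x \<noteq> xs \<longrightarrow> Vinf d A u lam x > 0)"
      using U xsX V0 by blast
  qed
  show ?thesis using P1 P2 P3 P4 P5 by blast
qed

end
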